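(* Let $\mathcal{U}=\{1,\dots,K\}$ be a set of $K\ge 1$ users (UEs) and let $\mathcal{B}=\mathcal{T}\cup\mathcal{S}$ be a finite set of base stations partitioned into a set $\mathcal{T}$ of terrestrial base stations and a set $\mathcal{S}$ of satellite base stations. Let $x_{ij}\in\{0,1\}$ ($i\in\mathcal{U}$, $j\in\mathcal{B}$) be a fixed association, with each UE associated to exactly one base station ($\sum_{j\in\mathcal{B}}x_{ij}=1$ for every $i$), and let $r_{ij}>0$ be fixed constants not depending on $\varepsilon$. For $\varepsilon\in[0,1]$ define the throughput of UE $i$ as $$R_i(\varepsilon)=\sum_{j\in\mathcal{S}}\varepsilon\,x_{ij}r_{ij}+\sum_{j\in\mathcal{T}}(1-\varepsilon)\,x_{ij}r_{ij},$$ and the utility $f(\varepsilon)=\sum_{i\in\mathcal{U}}\log R_i(\varepsilon)$ (with $\log 0=-\infty$), in which all UEs are weighted equally. Let $K_{\mathcal{S}}$ denote the number of UEs associated to a satellite base station, i.e. $K_{\mathcal{S}}=\#\{i\in\mathcal{U}:\ x_{ij}=1\text{ for some } j\in\mathcal{S}\}$. Then the optimal bandwidth fraction allocated to the satellite tier, i.e. the maximizer of $f$ over $\varepsilon\in[0,1]$, is $$\varepsilon^*=\frac{K_{\mathcal{S}}}{K}.$$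
   Context: Model: a total bandwidth $W$ is split orthogonally, a fraction $\varepsilon$ going to all satellite base stations and a fraction $1-\varepsilon$ to all terrestrial base stations; the quantity $r_{ij}=\frac{W}{k_j}\log_2(1+\gamma_{ij})$ (with $k_j$ the number of UEs served by base station $j$ and $\gamma_{ij}$ the SINR, both independent of $\varepsilon$) is the throughput UE $i$ would obtain from base station $j$ if that base station's tier were given the whole bandwidth. "All UEs have the same requirements" corresponds to the unweighted sum of logarithms in $f$. *)

theory Defs
  imports "HOL-Analysis.Analysis" "HOL-Library.Extended_Real"
begin

definition throughput ::
  "'b set \<Rightarrow> 'b set \<Rightarrow> (nat \<Rightarrow> 'b \<Rightarrow> real) \<Rightarrow> (nat \<Rightarrow> 'b \<Rightarrow> real) \<Rightarrow> nat \<Rightarrow> real \<Rightarrow> real" where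
  "throughput T S x r i \<epsilon> =
     (\<Sum>j\<in>S. \<epsilon> * x i j * r i j) + (\<Sum>j\<in>T. (1 - \<epsilon>) * x i j * r i j)"

definition eln :: "real \<Rightarrow> ereal" where
  "eln y = (if y > 0 then ereal (ln y) else -\<infinity>)"

definition utility ::
  "nat \<Rightarrow> 'b set \<Rightarrow> 'b set \<Rightarrow> (nat \<Rightarrow> 'b \<Rightarrow> real) \<Rightarrow> (nat \<Rightarrow> 'b \<Rightarrow> real) \<Rightarrow> real \<Rightarrow> ereal" where
  "utility K T S x r \<epsilon> = (\<Sum>i\<in>{1..K}. eln (throughput T S x r i \<epsilon>))"

definition num_sat_users :: "nat \<Rightarrow> 'b set \<Rightarrow> (nat \<Rightarrow> 'b \<Rightarrow> real) \<Rightarrow> nat" where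
  "num_sat_users K S x = card {i\<in>{1..K}. \<exists>j\<in>S. x i j = 1}"

end

theory Submission
  imports Defs
begin

lemma eln_sum_pos:
  assumes "finite A" "\<And>i. i \<in> A \<Longrightarrow> f i > 0"
  shows "(\<Sum>i\<in>A. eln (f i)) = ereal (\<Sum>i\<in>A. ln (f i))"
proof -
  have "(\<Sum>i\<in>A. eln (f i)) = (\<Sum>i\<in>A. ereal (ln (f i)))"
    using assms(2) by (intro sum.cong) (auto simp: eln_def)
  then show ?thesis by simp
qed

lemma eln_ne_inf: "eln y \<noteq> \<infinity>"
  by (simp add: eln_def)

lemma eln_sum_nonpos:
  assumes "finite A" "i0 \<in> A" "f i0 \<le> 0"
  shows "(\<Sum>i\<in>A. eln (f i)) = -\<infinity>"
proof -
  have "(\<Sum>i\<in>A. eln (f i)) = eln (f i0) + (\<Sum>i\<in>A - {i0}. eln (f i))"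
    using assms by (simp add: sum.remove)
  moreover have "(\<Sum>i\<in>A - {i0}. eln (f i)) \<noteq> \<infinity>"
    using assms(1) by (simp add: sum_Pinfty eln_ne_inf)
  moreover have "eln (f i0) = -\<infinity>" using assms(3) by (simp add: eln_def)
  ultimately show ?thesis by simp
qed

theorem proposition2:
  fixes K :: nat and T S :: "'b set"
    and x r :: "nat \<Rightarrow> 'b \<Rightarrow> real"
  assumes K_pos: "K \<ge> 1"
    and fin_T: "finite T" and fin_S: "finite S"
    and disj: "T \<inter> S = {}"
    and x_bin: "\<And>i j. i \<in> {1..K} \<Longrightarrow> j \<in> T \<union> S \<Longrightarrow> x i j \<in> {0, 1}"
    and x_one: "\<And>i. i \<in> {1..K} \<Longrightarrow> (\<Sum>j\<in>T \<union> S. x i j) = 1"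
    and r_pos: "\<And>i j. i \<in> {1..K} \<Longrightarrow> j \<in> T \<union> S \<Longrightarrow> r i j > 0"
  shows "{\<epsilon> \<in> {0..1}. \<forall>e \<in> {0..1}. utility K T S x r e \<le> utility K T S x r \<epsilon>}
           = {real (num_sat_users K S x) / real K}"
proof -
  define A where "A i = (\<Sum>j\<in>S. x i j * r i j)" for i
  define B where "B i = (\<Sum>j\<in>T. x i j * r i j)" for i
  define U where "U = {1..K}"
  define Us where "Us = {i\<in>U. \<exists>j\<in>S. x i j = 1}"
  define a where "a = card Us"
  define p where "p = real a / real K"
  have finU: "finite U" by (simp add: U_def)
  have UsU: "Us \<subseteq> U" by (auto simp: Us_def)
  have thr: "throughput T S x r i e = e * A i + (1 - e) * B i" for i e
    by (simp add: throughput_def A_def B_def sum_distrib_left mult.assoc)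
  have AB: "(i \<in> Us \<and> A i > 0 \<and> B i = 0) \<or> (i \<notin> Us \<and> A i = 0 \<and> B i > 0)" if iU: "i \<in> U" for i
  proof -
    have xnn: "\<And>j. j \<in> T \<union> S \<Longrightarrow> x i j \<ge> 0" using x_bin iU unfolding U_def by fastforce
    have xrnn: "\<And>j. j \<in> T \<union> S \<Longrightarrow> x i j * r i j \<ge> 0"
      using xnn r_pos iU unfolding U_def by (meson less_imp_le mult_nonneg_nonneg)
    have sum1: "(\<Sum>j\<in>T. x i j) + (\<Sum>j\<in>S. x i j) = 1"
      using x_one[of i] iU sum.union_disjoint[OF fin_T fin_S disj, of "x i"] unfolding U_def by simp
    show ?thesis
    proof (cases "i \<in> Us")
      case True
      then obtain j where j: "j \<in> S" "x i j = 1" by (auto simp: Us_def)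
      have "x i j \<le> (\<Sum>j\<in>S. x i j)"
        using j xnn by (intro member_le_sum fin_S) auto
      moreover have "(\<Sum>j\<in>T. x i j) \<ge> 0" using xnn by (intro sum_nonneg) auto
      ultimately have "(\<Sum>j\<in>T. x i j) = 0" using sum1 j by linarith
      hence "\<forall>j\<in>T. x i j = 0" using xnn fin_T by (subst (asm) sum_nonneg_eq_0_iff) auto
      hence B0: "B i = 0" by (simp add: B_def)
      have "x i j * r i j \<le> A i"
        unfolding A_def using j xrnn
        by (intro member_le_sum fin_S) auto
      moreover have "x i j * r i j > 0" using j r_pos iU U_def by auto
      ultimately show ?thesis using True B0 by auto
    next
      case False
      hence "\<forall>j\<in>S. x i j = 0" using x_bin iU unfolding Us_def U_def by fastforce
      hence A0: "A i = 0" by (simp add: A_def)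
      have "(\<Sum>j\<in>S. x i j) = 0" using \<open>\<forall>j\<in>S. x i j = 0\<close> by simp
      hence "(\<Sum>j\<in>T. x i j) = 1" using sum1 by simp
      then obtain j where j: "j \<in> T" "x i j \<noteq> 0" by (metis sum.neutral zero_neq_one)
      hence "x i j = 1" using x_bin iU U_def by auto
      have "x i j * r i j \<le> B i"
        unfolding B_def using j xrnn
        by (intro member_le_sum fin_T) auto
      moreover have "x i j * r i j > 0" using \<open>x i j = 1\<close> j r_pos iU U_def by auto
      ultimately show ?thesis using False A0 by auto
    qed
  qed
  have cardU: "card U = K" by (simp add: U_def)
  have Kpos: "real K > 0" using K_pos by simp
  have p01: "0 \<le> p" "p \<le> 1"
    using card_mono[OF finU UsU] cardU Kpos by (auto simp: p_def a_def)
  have ppos: "p > 0" if "i \<in> Us" for i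
  proof -
    have "a > 0" using that finU UsU unfolding a_def
      by (metis card_gt_0_iff empty_iff finite_subset)
    thus ?thesis using Kpos by (simp add: p_def)
  qed
  have plt: "p < 1" if "i \<in> U" "i \<notin> Us" for i
  proof -
    have "Us \<subset> U" using that UsU by auto
    hence "a < K" using psubset_card_mono[OF finU] cardU a_def by metis
    thus ?thesis using Kpos by (simp add: p_def)
  qed
  define Tp where "Tp i e = e * A i + (1 - e) * B i" for i e
  have Tp_pos: "Tp i p > 0" if "i \<in> U" for i
    using AB[OF that] ppos plt[OF that] by (auto simp: Tp_def)
  have util: "utility K T S x r e = (\<Sum>i\<in>U. eln (Tp i e))" for e
    by (simp add: utility_def U_def thr Tp_def)
  have up: "utility K T S x r p = ereal (\<Sum>i\<in>U. ln (Tp i p))"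
    using util eln_sum_pos[OF finU Tp_pos] by simp
  have Ksum: "card (U - Us) = K - a" using card_Diff_subset[OF _ UsU] finU cardU a_def
    by (metis finite_subset UsU)
  have key: "(\<Sum>i\<in>U. (Tp i e - Tp i p) / Tp i p) \<le> 0" if e01: "0 \<le> e" "e \<le> 1" for e
  proof -
    have "(\<Sum>i\<in>U. (Tp i e - Tp i p) / Tp i p) =
          (\<Sum>i\<in>U. if i \<in> Us then (e - p) / p else - ((e - p) / (1 - p)))"
    proof (intro sum.cong refl)
      fix i assume iU: "i \<in> U"
      show "(Tp i e - Tp i p) / Tp i p = (if i \<in> Us then (e - p) / p else - ((e - p) / (1 - p)))"
      proof (cases "i \<in> Us")
        case True
        hence "p > 0" "A i > 0" "B i = 0" using ppos AB[OF iU] by auto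
        thus ?thesis using True by (simp add: Tp_def field_simps)
      next
        case False
        hence "p < 1" "B i > 0" "A i = 0" using plt[OF iU] AB[OF iU] by auto
        thus ?thesis using False by (simp add: Tp_def field_simps)
      qed
    qed
    also have "\<dots> = real a * ((e - p) / p) - real (K - a) * ((e - p) / (1 - p))"
      using finU UsU Ksum
      by (simp add: sum.If_cases Int_absorb1 Diff_eq[symmetric] a_def sum_negf)
    also have "\<dots> \<le> 0"
    proof -
      have aK: "a \<le> K" using card_mono[OF finU UsU] cardU a_def by simp
      show ?thesis
      proof (cases "a = 0")
        case True thus ?thesis using e01 by (simp add: p_def)
      next
        case a0: False
        show ?thesis
        proof (cases "a = K")
          case True thus ?thesis using e01 Kpos by (simp add: p_def mult_nonneg_nonpos)
        next
          case False
          hence "a < K" using aK by simp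
          hence p1: "p < 1" and p0: "p > 0" using a0 Kpos by (auto simp: p_def)
          have "real a * ((e - p) / p) = real K * (e - p)" using a0 Kpos by (simp add: p_def)
          moreover have "real (K - a) * ((e - p) / (1 - p)) = real K * (e - p)"
            using \<open>a < K\<close> Kpos by (simp add: p_def of_nat_diff field_simps)
          ultimately show ?thesis by simp
        qed
      qed
    qed
    finally show ?thesis .
  qed
  have main: "utility K T S x r e \<le> utility K T S x r p \<and> (e \<noteq> p \<longrightarrow> utility K T S x r e < utility K T S x r p)"
    if e01: "0 \<le> e" "e \<le> 1" for e
  proof (cases "\<forall>i\<in>U. Tp i e > 0")
    case True
    have ue: "utility K T S x r e = ereal (\<Sum>i\<in>U. ln (Tp i e))"
      using util eln_sum_pos[OF finU] True by simp
    have le: "(\<Sum>i\<in>U. ln (Tp i e)) - (\<Sum>i\<in>U. ln (Tp i p)) \<le> (\<Sum>i\<in>U. (Tp i e - Tp i p) / Tp i p)"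
      unfolding sum_subtractf[symmetric]
      by (intro sum_mono ln_diff_le) (use True Tp_pos in auto)
    have lt: "(\<Sum>i\<in>U. ln (Tp i e)) - (\<Sum>i\<in>U. ln (Tp i p)) < (\<Sum>i\<in>U. (Tp i e - Tp i p) / Tp i p)"
      if "e \<noteq> p"
    proof -
      have ne: "Tp i e \<noteq> Tp i p" if "i \<in> U" for i
        using AB[OF that] \<open>e \<noteq> p\<close> by (auto simp: Tp_def)
      have "U \<noteq> {}" using K_pos by (auto simp: U_def)
      thus ?thesis
        unfolding sum_subtractf[symmetric]
        by (intro sum_strict_mono ln_diff_less finU) (use True Tp_pos ne in auto)
    qed
    show ?thesis using le lt key[OF e01] ue up by auto
  next
    case False
    then obtain i where "i \<in> U" "Tp i e \<le> 0" by (auto simp: not_less)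
    hence "utility K T S x r e = -\<infinity>" using util eln_sum_nonpos[OF finU] by simp
    moreover have "p \<noteq> e \<or> True" by simp
    ultimately show ?thesis using up by simp
  qed
  have pn: "real (num_sat_users K S x) / real K = p"
    by (simp add: num_sat_users_def p_def a_def Us_def U_def)
  show ?thesis
    unfolding pn
  proof (intro equalityI subsetI)
    fix q assume "q \<in> {\<epsilon> \<in> {0..1}. \<forall>e \<in> {0..1}. utility K T S x r e \<le> utility K T S x r \<epsilon>}"
    hence q: "0 \<le> q" "q \<le> 1" "utility K T S x r p \<le> utility K T S x r q" using p01 by auto
    show "q \<in> {p}" using main[OF q(1,2)] q(3) by (auto simp: not_le[symmetric])
  next
    fix q assume "q \<in> {p}"
    thus "q \<in> {\<epsilon> \<in> {0..1}. \<forall>e \<in> {0..1}. utility K T S x r e \<le> utility K T S x r \<epsilon>}"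
      using main p01 by auto
  qed
qed

end
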